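(* Let $q\ge2$, let $\mathbf{u}$ be a probability distribution on $[1:q]$, and let $a\ne b\in[1:q]$. Then for all sufficiently large $n$: $D_{ab}(M_{n,\mathbf{u}})=2$ if $a\notin\mathrm{supp}(\mathbf{u})$ or $b\notin\mathrm{supp}(\mathbf{u})$, and $D_{ab}(M_{n,\mathbf{u}})\le \frac{C_1(\log n)^{(|\mathrm{supp}(\mathbf{u})|-2)/2}}{\sqrt n}$ if $a,b\in\mathrm{supp}(\mathbf{u})$, where $C_1$ is a constant independent of $n$. In particular, if $\mathbf{u}$ has strictly positive entries, then $D_{ab}(M_{n,\mathbf{u}})\le \frac{C_1(\log n)^{(q-2)/2}}{\sqrt n}$ for every $a\ne b$.
   Context: $\mathcal{N}_{q,n}=\{\mathbf{t}\in\mathbb{Z}_{\ge0}^q:\sum_it_i=n\}$. The multinomial distribution is $M_{n,\mathbf{u}}(\mathbf{t})=\frac{n!}{t_1!\cdots t_q!}\prod_iu_i^{t_i}$ for $\mathbf{t}\in\mathcal{N}_{q,n}$ (with $0^0=1$). $\mathrm{supp}(\mathbf{u})=\{i:u_i>0\}$. $\mathbf{e}_c$ is the $c$-th standard unit vector in $\mathbb{Z}^q$. For a distribution $Q$ on $\mathcal{N}_{q,n}$ and $a\ne b$, $D_{ab}(Q)=\sum_{\mathbf{t}\in\mathcal{N}_{q,n+1}}|Q(\mathbf{t}-\mathbf{e}_b)-Q(\mathbf{t}-\mathbf{e}_a)|$, where $Q(\mathbf{s})=0$ whenever $\mathbf{s}\notin\mathcal{N}_{q,n}$ (some coordinate outside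 $[0:n]$). Logarithms base 2. *)

theory Defs
  imports "HOL-Analysis.Analysis"
begin

text \<open>Vectors in Z_{>=0}^q are functions nat => nat indexed by [1:q], zero outside.\<close>

definition Nset :: "nat \<Rightarrow> nat \<Rightarrow> (nat \<Rightarrow> nat) set" where
  "Nset q n = {t. (\<forall>i. i \<notin> {1..q} \<longrightarrow> t i = 0) \<and> (\<Sum>i\<in>{1..q}. t i) = n}"

definition multinomial_dist :: "nat \<Rightarrow> nat \<Rightarrow> (nat \<Rightarrow> real) \<Rightarrow> (nat \<Rightarrow> nat) \<Rightarrow> real" where
  "multinomial_dist q n u t =
     (if t \<in> Nset q n
      then fact n / (\<Prod>i\<in>{1..q}. fact (t i)) * (\<Prod>i\<in>{1..q}. u i ^ t i)
      else 0)"

definition supp :: "nat \<Rightarrow> (nat \<Rightarrow> real) \<Rightarrow> nat set" where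
  "supp q u = {i\<in>{1..q}. u i > 0}"

text \<open>Q(t - e_c), with Q extended by 0 outside N_{q,n}.\<close>
definition shift_eval :: "nat \<Rightarrow> nat \<Rightarrow> ((nat \<Rightarrow> nat) \<Rightarrow> real) \<Rightarrow> nat \<Rightarrow> (nat \<Rightarrow> nat) \<Rightarrow> real" where
  "shift_eval q n Q c t =
     (if 1 \<le> t c \<and> t(c := t c - 1) \<in> Nset q n then Q (t(c := t c - 1)) else 0)"

definition Dab :: "nat \<Rightarrow> nat \<Rightarrow> nat \<Rightarrow> nat \<Rightarrow> ((nat \<Rightarrow> nat) \<Rightarrow> real) \<Rightarrow> real" where
  "Dab q n a b Q = (\<Sum>t\<in>Nset q (n+1). \<bar>shift_eval q n Q b t - shift_eval q n Q a t\<bar>)"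

end

theory Submission imports Defs begin

lemma Nset_finite: "finite (Nset q n)"
proof -
  have "Nset q n \<subseteq> {f. \<forall>x. (x \<in> {1..q} \<longrightarrow> f x \<in> {0..n}) \<and> (x \<notin> {1..q} \<longrightarrow> f x = 0)}"
  proof
    fix t assume t: "t \<in> Nset q n"
    have "\<forall>x\<in>{1..q}. t x \<le> n"
    proof
      fix x assume "x \<in> {1..q}"
      then have "t x \<le> (\<Sum>i\<in>{1..q}. t i)" by (intro member_le_sum) auto
      then show "t x \<le> n" using t by (simp add: Nset_def)
    qed
    then show "t \<in> {f. \<forall>x. (x \<in> {1..q} \<longrightarrow> f x \<in> {0..n}) \<and> (x \<notin> {1..q} \<longrightarrow> f x = 0)}"
      using t by (auto simp: Nset_def)
  qed
  then show ?thesis by (rule finite_subset) (intro finite_set_of_finite_funs; simp)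
qed

lemma Nset_dec:
  assumes "t \<in> Nset q (Suc n)" "c \<in> {1..q}" "1 \<le> t c"
  shows "t(c := t c - 1) \<in> Nset q n"
proof -
  have "(\<Sum>i\<in>{1..q}. (t(c := t c - 1)) i) = (t c - 1) + (\<Sum>i\<in>{1..q}-{c}. t i)"
    using assms(2) by (simp add: sum.remove)
  also have "(\<Sum>i\<in>{1..q}. t i) = t c + (\<Sum>i\<in>{1..q}-{c}. t i)"
    using assms(2) by (simp add: sum.remove)
  ultimately show ?thesis using assms by (auto simp: Nset_def)
qed

lemma Nset_inc:
  assumes "s \<in> Nset q n" "c \<in> {1..q}"
  shows "s(c := Suc (s c)) \<in> Nset q (Suc n)"
proof -
  have "(\<Sum>i\<in>{1..q}. (s(c := Suc (s c))) i) = Suc (s c) + (\<Sum>i\<in>{1..q}-{c}. s i)"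
    using assms(2) by (simp add: sum.remove)
  also have "(\<Sum>i\<in>{1..q}. s i) = s c + (\<Sum>i\<in>{1..q}-{c}. s i)"
    using assms(2) by (simp add: sum.remove)
  ultimately show ?thesis using assms by (auto simp: Nset_def)
qed

lemma shift_sum:
  assumes c: "c \<in> {1..q}"
  shows "(\<Sum>t\<in>Nset q (Suc n). shift_eval q n Q c t * g t)
       = (\<Sum>s\<in>Nset q n. Q s * g (s(c := Suc (s c))))"
proof -
  let ?T = "{t \<in> Nset q (Suc n). 1 \<le> t c}"
  have "(\<Sum>t\<in>Nset q (Suc n). shift_eval q n Q c t * g t) = (\<Sum>t\<in>?T. shift_eval q n Q c t * g t)"
    by (rule sum.mono_neutral_right) (auto simp: Nset_finite shift_eval_def not_le)
  also have "\<dots> = (\<Sum>s\<in>Nset q n. Q s * g (s(c := Suc (s c))))"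
  proof (rule sum.reindex_bij_witness[where j = "\<lambda>t. t(c := t c - 1)" and i = "\<lambda>s. s(c := Suc (s c))"])
    fix s assume s: "s \<in> Nset q n"
    show "s(c := Suc (s c)) \<in> ?T" using Nset_inc[OF s c] by auto
    show "(s(c := Suc (s c)))(c := (s(c := Suc (s c))) c - 1) = s" by auto
  next
    fix t assume t: "t \<in> ?T"
    then show "t(c := t c - 1) \<in> Nset q n" using Nset_dec[OF _ c] by auto
    show "(t(c := t c - 1))(c := Suc ((t(c := t c - 1)) c)) = t" using t by auto
    show "Q (t(c := t c - 1)) * g ((t(c := t c - 1))(c := Suc ((t(c := t c - 1)) c))) = shift_eval q n Q c t * g t"
      using t Nset_dec[OF _ c, of t] by (auto simp: shift_eval_def)
  qed
  finally show ?thesis .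
qed

lemma alg:
  fixes P U x :: real and k n :: nat
  assumes "P > 0"
  shows "fact (Suc n) / (fact (Suc k) * P) * (x ^ Suc k * U) * real (Suc k)
       = real (Suc n) * x * (fact n / (fact k * P) * (x ^ k * U))"
proof -
  have "fact k > (0::real)" by simp
  then show ?thesis using assms by (simp add: fact_Suc field_simps del: of_nat_Suc)
qed

abbreviation "MD q n u \<equiv> multinomial_dist q n u"

lemma MD_nonneg:
  assumes "\<forall>i\<in>{1..q}. u i \<ge> 0"
  shows "MD q n u t \<ge> 0"
  using assms unfolding multinomial_dist_def
  by (auto intro!: mult_nonneg_nonneg divide_nonneg_nonneg prod_nonneg)

lemma MD_shift:
  assumes t: "t \<in> Nset q (Suc n)" and c: "c \<in> {1..q}"
  shows "MD q (Suc n) u t * real (t c) = real (Suc n) * u c * shift_eval q n (MD q n u) c t"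
proof (cases "t c = 0")
  case True then show ?thesis by (simp add: shift_eval_def)
next
  case False
  define t' where "t' = t(c := t c - 1)"
  have t': "t' \<in> Nset q n" using Nset_dec[OF t c] False by (simp add: t'_def)
  have eq: "\<forall>i\<in>{1..q}-{c}. t' i = t i" by (simp add: t'_def)
  have p1: "(\<Prod>i\<in>{1..q}. fact (t i)) = (fact (t c) :: real) * (\<Prod>i\<in>{1..q}-{c}. fact (t' i))"
    using c eq by (simp add: prod.remove)
  have p1': "(\<Prod>i\<in>{1..q}. fact (t' i)) = (fact (t' c) :: real) * (\<Prod>i\<in>{1..q}-{c}. fact (t' i))"
    using c by (simp add: prod.remove)
  have p2: "(\<Prod>i\<in>{1..q}. u i ^ t i) = u c ^ t c * (\<Prod>i\<in>{1..q}-{c}. u i ^ t' i)"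
    using c eq by (simp add: prod.remove)
  have p2': "(\<Prod>i\<in>{1..q}. u i ^ t' i) = u c ^ t' c * (\<Prod>i\<in>{1..q}-{c}. u i ^ t' i)"
    using c by (simp add: prod.remove)
  have tc: "t c = Suc (t' c)" using False by (simp add: t'_def)
  have pos: "(\<Prod>i\<in>{1..q}-{c}. fact (t' i)) > (0::real)" by (intro prod_pos) auto
  have "shift_eval q n (MD q n u) c t = MD q n u t'"
    using t' False by (simp add: shift_eval_def t'_def)
  moreover have "MD q (Suc n) u t * real (t c) = real (Suc n) * u c * MD q n u t'"
    using t t' pos unfolding multinomial_dist_def
    apply (simp only: if_True p1 p1' p2 p2' tc)
    apply (rule alg[OF pos])
    done
  ultimately show ?thesis by simp
qed

lemma mom:
  assumes c: "c \<in> {1..q}"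
  shows "(\<Sum>t\<in>Nset q (Suc n). MD q (Suc n) u t * (real (t c) * g t))
       = real (Suc n) * u c * (\<Sum>s\<in>Nset q n. MD q n u s * g (s(c := Suc (s c))))"
proof -
  have "(\<Sum>t\<in>Nset q (Suc n). MD q (Suc n) u t * (real (t c) * g t))
      = (\<Sum>t\<in>Nset q (Suc n). real (Suc n) * u c * (shift_eval q n (MD q n u) c t * g t))"
  proof (rule sum.cong[OF refl])
    fix t assume t: "t \<in> Nset q (Suc n)"
    have "MD q (Suc n) u t * (real (t c) * g t) = (MD q (Suc n) u t * real (t c)) * g t"
      by (simp only: mult.assoc)
    also have "\<dots> = real (Suc n) * u c * shift_eval q n (MD q n u) c t * g t"
      by (simp only: MD_shift[OF t c])
    finally show "MD q (Suc n) u t * (real (t c) * g t) = real (Suc n) * u c * (shift_eval q n (MD q n u) c t * g t)"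
      by (simp only: mult.assoc)
  qed
  also have "\<dots> = real (Suc n) * u c * (\<Sum>t\<in>Nset q (Suc n). shift_eval q n (MD q n u) c t * g t)"
    by (simp add: sum_distrib_left)
  also have "\<dots> = real (Suc n) * u c * (\<Sum>s\<in>Nset q n. MD q n u s * g (s(c := Suc (s c))))"
    by (simp add: shift_sum[OF c])
  finally show ?thesis .
qed

lemma Nset_0: "Nset q 0 = {\<lambda>_. 0}"
proof -
  have "t = (\<lambda>_. 0)" if "t \<in> Nset q 0" for t
  proof
    fix x show "t x = 0" using that by (cases "x \<in> {1..q}") (auto simp: Nset_def)
  qed
  then show ?thesis by (auto simp: Nset_def)
qed

lemma mom1:
  assumes c: "c \<in> {1..q}"
  shows "(\<Sum>t\<in>Nset q (Suc n). MD q (Suc n) u t * real (t c))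
       = real (Suc n) * u c * (\<Sum>s\<in>Nset q n. MD q n u s)"
proof -
  have "(\<Sum>t\<in>Nset q (Suc n). MD q (Suc n) u t * (real (t c) * 1))
       = real (Suc n) * u c * (\<Sum>s\<in>Nset q n. MD q n u s * 1)"
    by (rule mom[OF c])
  then show ?thesis by (simp only: mult_1_right)
qed

lemma total:
  assumes "(\<Sum>i\<in>{1..q}. u i) = 1"
  shows "(\<Sum>t\<in>Nset q n. MD q n u t) = 1"
proof (induction n)
  case 0
  show ?case by (simp add: Nset_0 multinomial_dist_def)
next
  case (Suc n)
  have "real (Suc n) * (\<Sum>t\<in>Nset q (Suc n). MD q (Suc n) u t)
      = (\<Sum>t\<in>Nset q (Suc n). real (Suc n) * MD q (Suc n) u t)"
    by (rule sum_distrib_left)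
  also have "\<dots> = (\<Sum>t\<in>Nset q (Suc n). MD q (Suc n) u t * (\<Sum>c\<in>{1..q}. real (t c)))"
  proof (rule sum.cong[OF refl])
    fix t assume "t \<in> Nset q (Suc n)"
    then have "(\<Sum>c\<in>{1..q}. real (t c)) = real (Suc n)"
      by (simp add: Nset_def flip: of_nat_sum)
    then show "real (Suc n) * MD q (Suc n) u t = MD q (Suc n) u t * (\<Sum>c\<in>{1..q}. real (t c))"
      by simp
  qed
  also have "\<dots> = (\<Sum>c\<in>{1..q}. \<Sum>t\<in>Nset q (Suc n). MD q (Suc n) u t * real (t c))"
    unfolding sum_distrib_left by (rule sum.swap)
  also have "\<dots> = (\<Sum>c\<in>{1..q}. real (Suc n) * u c)"
    by (rule sum.cong[OF refl]) (simp add: mom1 Suc.IH)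
  also have "\<dots> = real (Suc n)" using assms by (simp flip: sum_distrib_left)
  finally have "real (Suc n) * (\<Sum>t\<in>Nset q (Suc n). MD q (Suc n) u t) = real (Suc n) * 1"
    by (simp only: mult_1_right)
  then show ?case by (subst (asm) mult_left_cancel) auto
qed

lemma E1:
  assumes "(\<Sum>i\<in>{1..q}. u i) = 1" "c \<in> {1..q}"
  shows "(\<Sum>t\<in>Nset q n. MD q n u t * real (t c)) = real n * u c"
proof (cases n)
  case 0 then show ?thesis by (simp add: Nset_0)
next
  case (Suc m)
  show ?thesis using mom[OF assms(2), of m u "\<lambda>_. 1"] total[OF assms(1), of m] Suc by simp
qed

lemma E2:
  assumes "(\<Sum>i\<in>{1..q}. u i) = 1" "c \<in> {1..q}"
  shows "(\<Sum>t\<in>Nset q (Suc n). MD q (Suc n) u t * (real (t c) * real (t c)))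
     = real (Suc n) * u c * (real n * u c + 1)"
proof -
  have "(\<Sum>s\<in>Nset q n. MD q n u s * real ((s(c := Suc (s c))) c))
     = (\<Sum>s\<in>Nset q n. MD q n u s * real (s c) + MD q n u s)"
    by (simp add: algebra_simps)
  also have "\<dots> = real n * u c + 1" using E1[OF assms] total[OF assms(1)] by (simp add: sum.distrib)
  finally have h: "(\<Sum>s\<in>Nset q n. MD q n u s * real ((s(c := Suc (s c))) c)) = real n * u c + 1" .
  have m: "(\<Sum>t\<in>Nset q (Suc n). MD q (Suc n) u t * (real (t c) * real (t c)))
       = real (Suc n) * u c * (\<Sum>s\<in>Nset q n. MD q n u s * real ((s(c := Suc (s c))) c))"
    by (rule mom[OF assms(2)])
  show ?thesis unfolding m h ..
qed

lemma E12:
  assumes "(\<Sum>i\<in>{1..q}. u i) = 1" "a \<in> {1..q}" "b \<in> {1..q}" "a \<noteq> b"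
  shows "(\<Sum>t\<in>Nset q (Suc n). MD q (Suc n) u t * (real (t b) * real (t a)))
     = real (Suc n) * u b * (real n * u a)"
proof -
  have "(\<Sum>s\<in>Nset q n. MD q n u s * real ((s(b := Suc (s b))) a)) = (\<Sum>s\<in>Nset q n. MD q n u s * real (s a))"
    using assms(4) by simp
  also have "\<dots> = real n * u a" by (rule E1[OF assms(1,2)])
  finally have h: "(\<Sum>s\<in>Nset q n. MD q n u s * real ((s(b := Suc (s b))) a)) = real n * u a" .
  have m: "(\<Sum>t\<in>Nset q (Suc n). MD q (Suc n) u t * (real (t b) * real (t a)))
       = real (Suc n) * u b * (\<Sum>s\<in>Nset q n. MD q n u s * real ((s(b := Suc (s b))) a))"
    by (rule mom[OF assms(3)])
  show ?thesis unfolding m h ..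
qed

lemma shift_pos:
  assumes t: "t \<in> Nset q (Suc n)" and c: "c \<in> {1..q}" and u: "u c > 0"
  shows "shift_eval q n (MD q n u) c t = MD q (Suc n) u t * real (t c) / (real (Suc n) * u c)"
proof -
  have e: "MD q (Suc n) u t * real (t c) = (real (Suc n) * u c) * shift_eval q n (MD q n u) c t"
    by (rule MD_shift[OF t c])
  have nz: "real (Suc n) * u c \<noteq> 0" using u by simp
  show ?thesis unfolding e using nz by simp
qed

lemma MD_zero:
  assumes "MD q n u s \<noteq> 0" "i \<in> {1..q}" "u i = 0"
  shows "s i = 0"
proof (rule ccontr)
  assume "s i \<noteq> 0"
  then have "(\<Prod>j\<in>{1..q}. u j ^ s j) = 0" using assms(2,3)
    by (intro prod_zero) (auto intro!: bexI[of _ i])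
  then have "MD q n u s = 0" unfolding multinomial_dist_def by simp
  then show False using assms(1) by simp
qed

lemma shift_disj:
  assumes "u c = 0" "c \<noteq> d" "c \<in> {1..q}" "d \<in> {1..q}"
  shows "shift_eval q n (MD q n u) c t = 0 \<or> shift_eval q n (MD q n u) d t = 0"
proof (rule ccontr)
  assume "\<not> ?thesis"
  then have h1: "1 \<le> t c" "MD q n u (t(c := t c - 1)) \<noteq> 0"
    and h2: "MD q n u (t(d := t d - 1)) \<noteq> 0"
    by (auto simp: shift_eval_def split: if_splits)
  have "(t(c := t c - 1)) c = 0" by (rule MD_zero[OF h1(2) assms(3,1)])
  moreover have "(t(d := t d - 1)) c = 0" by (rule MD_zero[OF h2 assms(3,1)])
  ultimately show False using h1(1) assms(2) by auto
qed

lemma shift_nonneg: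
  assumes "\<forall>i\<in>{1..q}. u i \<ge> 0"
  shows "shift_eval q n (MD q n u) c t \<ge> 0"
  using MD_nonneg[OF assms] by (simp add: shift_eval_def)

lemma shift_total:
  assumes "(\<Sum>i\<in>{1..q}. u i) = 1" "c \<in> {1..q}"
  shows "(\<Sum>t\<in>Nset q (Suc n). shift_eval q n (MD q n u) c t) = 1"
proof -
  have "(\<Sum>t\<in>Nset q (Suc n). shift_eval q n (MD q n u) c t * 1) = (\<Sum>s\<in>Nset q n. MD q n u s * 1)"
    by (rule shift_sum[OF assms(2)])
  then show ?thesis using total[OF assms(1)] by simp
qed

lemma Dab_two:
  assumes "\<forall>i\<in>{1..q}. u i \<ge> 0" "(\<Sum>i\<in>{1..q}. u i) = 1"
    "u c = 0" "c \<noteq> d" "c \<in> {1..q}" "d \<in> {1..q}"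
  shows "(\<Sum>t\<in>Nset q (Suc n). \<bar>shift_eval q n (MD q n u) d t - shift_eval q n (MD q n u) c t\<bar>) = 2"
proof -
  have "(\<Sum>t\<in>Nset q (Suc n). \<bar>shift_eval q n (MD q n u) d t - shift_eval q n (MD q n u) c t\<bar>)
     = (\<Sum>t\<in>Nset q (Suc n). shift_eval q n (MD q n u) d t + shift_eval q n (MD q n u) c t)"
  proof (rule sum.cong[OF refl])
    fix t
    have "shift_eval q n (MD q n u) c t = 0 \<or> shift_eval q n (MD q n u) d t = 0"
      by (rule shift_disj[where u=u and c=c and d=d and q=q, OF assms(3-6)])
    moreover have "shift_eval q n (MD q n u) c t \<ge> 0" "shift_eval q n (MD q n u) d t \<ge> 0"
      using shift_nonneg[OF assms(1)] by auto
    ultimately show "\<bar>shift_eval q n (MD q n u) d t - shift_eval q n (MD q n u) c t\<bar>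
      = shift_eval q n (MD q n u) d t + shift_eval q n (MD q n u) c t" by auto
  qed
  also have "\<dots> = 2" using shift_total[OF assms(2) assms(5)] shift_total[OF assms(2) assms(6)]
    by (simp add: sum.distrib)
  finally show ?thesis .
qed

lemma var:
  fixes n :: nat
  assumes "(\<Sum>i\<in>{1..q}. u i) = 1" "a \<in> {1..q}" "b \<in> {1..q}" "a \<noteq> b"
    "u a > 0" "u b > 0"
  defines "m \<equiv> real (Suc n)"
  shows "(\<Sum>t\<in>Nset q (Suc n). MD q (Suc n) u t * (real (t b) / (m * u b) - real (t a) / (m * u a))^2)
     = (1 / u a + 1 / u b) / m"
proof -
  have m: "m > 0" by (simp add: m_def)
  let ?M = "MD q (Suc n) u"
  have "(\<Sum>t\<in>Nset q (Suc n). ?M t * (real (t b) / (m * u b) - real (t a) / (m * u a))^2)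
    = (\<Sum>t\<in>Nset q (Suc n). 1 / (m * u b)^2 * (?M t * (real (t b) * real (t b)))
         + 1 / (m * u a)^2 * (?M t * (real (t a) * real (t a)))
         - 2 / (m * m * u a * u b) * (?M t * (real (t b) * real (t a))))"
    by (rule sum.cong[OF refl]) (use m assms(5,6) in \<open>simp add: field_simps power2_eq_square\<close>)
  also have "\<dots> = 1 / (m * u b)^2 * (\<Sum>t\<in>Nset q (Suc n). ?M t * (real (t b) * real (t b)))
         + 1 / (m * u a)^2 * (\<Sum>t\<in>Nset q (Suc n). ?M t * (real (t a) * real (t a)))
         - 2 / (m * m * u a * u b) * (\<Sum>t\<in>Nset q (Suc n). ?M t * (real (t b) * real (t a)))"
    by (simp add: sum.distrib sum_subtractf sum_distrib_left)
  also have "\<dots> = 1 / (m * u b)^2 * (m * u b * (real n * u b + 1))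
         + 1 / (m * u a)^2 * (m * u a * (real n * u a + 1))
         - 2 / (m * m * u a * u b) * (m * u b * (real n * u a))"
    unfolding E2[OF assms(1,2)] E2[OF assms(1,3)] E12[OF assms(1-4)] m_def ..
  also have "\<dots> = (1 / u a + 1 / u b) / m"
    using m assms(5,6) by (simp add: field_simps power2_eq_square)
  finally show ?thesis .
qed

lemma main_bound:
  assumes "\<forall>i\<in>{1..q}. u i \<ge> 0" "(\<Sum>i\<in>{1..q}. u i) = 1" "a \<in> {1..q}" "b \<in> {1..q}" "a \<noteq> b"
    "u a > 0" "u b > 0"
  shows "Dab q n a b (MD q n u) \<le> sqrt ((1 / u a + 1 / u b) / real (Suc n))"
proof -
  define m where "m = real (Suc n)"
  have m: "m > 0" by (simp add: m_def)
  let ?M = "MD q (Suc n) u"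
  define Y where "Y t = real (t b) / (m * u b) - real (t a) / (m * u a)" for t :: "nat \<Rightarrow> nat"
  define V where "V = (1 / u a + 1 / u b) / m"
  have V: "V > 0" using m assms(6,7) unfolding V_def by (intro divide_pos_pos add_pos_pos) auto
  define l where "l = sqrt V"
  have l: "l > 0" "l^2 = V" using V by (auto simp: l_def)
  have "Dab q n a b (MD q n u) = (\<Sum>t\<in>Nset q (Suc n). ?M t * \<bar>Y t\<bar>)"
    unfolding Dab_def Suc_eq_plus1[symmetric]
  proof (rule sum.cong[OF refl])
    fix t assume t: "t \<in> Nset q (Suc n)"
    have "shift_eval q n (MD q n u) b t - shift_eval q n (MD q n u) a t = ?M t * Y t"
      unfolding shift_pos[where u=u and c=b, OF t assms(4,7)] shift_pos[where u=u and c=a, OF t assms(3,6)] Y_def m_def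
      by (simp add: field_simps)
    then show "\<bar>shift_eval q n (MD q n u) b t - shift_eval q n (MD q n u) a t\<bar> = ?M t * \<bar>Y t\<bar>"
      using MD_nonneg[OF assms(1)] by (simp add: abs_mult)
  qed
  also have "\<dots> \<le> (\<Sum>t\<in>Nset q (Suc n). ?M t * ((l^2 + (Y t)^2) / (2 * l)))"
  proof (rule sum_mono)
    fix t
    have "0 \<le> (\<bar>Y t\<bar> - l)^2" by simp
    then have "2 * l * \<bar>Y t\<bar> \<le> l^2 + (Y t)^2" by (simp add: power2_eq_square algebra_simps)
    then have "\<bar>Y t\<bar> \<le> (l^2 + (Y t)^2) / (2 * l)" using l by (simp add: field_simps)
    then show "?M t * \<bar>Y t\<bar> \<le> ?M t * ((l^2 + (Y t)^2) / (2 * l))"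
      using MD_nonneg[OF assms(1)] by (rule mult_left_mono) 
  qed
  also have "\<dots> = (l^2 * (\<Sum>t\<in>Nset q (Suc n). ?M t) + (\<Sum>t\<in>Nset q (Suc n). ?M t * (Y t)^2)) / (2 * l)"
  proof -
    have "(\<Sum>t\<in>Nset q (Suc n). ?M t * ((l^2 + (Y t)^2) / (2 * l)))
        = (\<Sum>t\<in>Nset q (Suc n). (l^2 * ?M t + ?M t * (Y t)^2) / (2 * l))"
      by (rule sum.cong[OF refl]) (simp add: algebra_simps)
    also have "\<dots> = (\<Sum>t\<in>Nset q (Suc n). l^2 * ?M t + ?M t * (Y t)^2) / (2 * l)"
      by (rule sum_divide_distrib[symmetric])
    also have "\<dots> = (l^2 * (\<Sum>t\<in>Nset q (Suc n). ?M t) + (\<Sum>t\<in>Nset q (Suc n). ?M t * (Y t)^2)) / (2 * l)"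
      by (simp only: sum.distrib sum_distrib_left)
    finally show ?thesis .
  qed
  also have "\<dots> = (V + V) / (2 * l)"
    using var[OF assms(2-7), of n] total[OF assms(2), of "Suc n"] l(2)
    unfolding Y_def V_def m_def by simp
  also have "\<dots> = l" using l by (simp add: field_simps power2_eq_square flip: l(2))
  finally show ?thesis by (simp add: l_def V_def m_def)
qed

lemma final_ineq:
  fixes K k :: real and n :: nat
  assumes "n \<ge> 2" "K \<ge> 0" "k \<ge> 2"
  shows "sqrt (K / real (Suc n)) \<le> sqrt K * (log 2 (real n)) powr ((k - 2) / 2) / sqrt (real n)"
proof -
  have n: "real n \<ge> 2" using assms(1) by simp
  have "sqrt (K / real (Suc n)) \<le> sqrt (K / real n)"
    using n assms(2) by (intro real_sqrt_le_mono divide_left_mono) auto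
  also have "\<dots> = sqrt K / sqrt (real n)" by (simp add: real_sqrt_divide)
  also have "\<dots> \<le> sqrt K * (log 2 (real n)) powr ((k - 2) / 2) / sqrt (real n)"
  proof -
    have "log 2 (real n) \<ge> 1" using n by simp
    then have "(log 2 (real n)) powr ((k - 2) / 2) \<ge> 1"
      using assms(3) by (intro ge_one_powr_ge_zero) auto
    then have "sqrt K * 1 \<le> sqrt K * (log 2 (real n)) powr ((k - 2) / 2)"
      using assms(2) by (intro mult_left_mono) auto
    then show ?thesis using n assms(2) by (intro divide_right_mono) auto
  qed
  finally show ?thesis .
qed

theorem lemma3:
  fixes q :: nat and u :: "nat \<Rightarrow> real" and a b :: nat
  assumes "q \<ge> 2"
    and "\<forall>i\<in>{1..q}. u i \<ge> 0" and "(\<Sum>i\<in>{1..q}. u i) = 1"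
    and "a \<in> {1..q}" and "b \<in> {1..q}" and "a \<noteq> b"
  shows "\<exists>C1 :: real. \<exists>N :: nat. \<forall>n\<ge>N.
     ((a \<notin> supp q u \<or> b \<notin> supp q u) \<longrightarrow>
        Dab q n a b (multinomial_dist q n u) = 2) \<and>
     ((a \<in> supp q u \<and> b \<in> supp q u) \<longrightarrow>
        Dab q n a b (multinomial_dist q n u)
          \<le> C1 * (log 2 (real n)) powr ((real (card (supp q u)) - 2) / 2) / sqrt (real n)) \<and>
     ((\<forall>i\<in>{1..q}. u i > 0) \<longrightarrow>
        Dab q n a b (multinomial_dist q n u)
          \<le> C1 * (log 2 (real n)) powr ((real q - 2) / 2) / sqrt (real n))"
proof -
  define K where "K = 1 / u a + 1 / u b"
  have main: "((a \<notin> supp q u \<or> b \<notin> supp q u) \<longrightarrow>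
        Dab q n a b (multinomial_dist q n u) = 2) \<and>
     ((a \<in> supp q u \<and> b \<in> supp q u) \<longrightarrow>
        Dab q n a b (multinomial_dist q n u)
          \<le> sqrt K * (log 2 (real n)) powr ((real (card (supp q u)) - 2) / 2) / sqrt (real n)) \<and>
     ((\<forall>i\<in>{1..q}. u i > 0) \<longrightarrow>
        Dab q n a b (multinomial_dist q n u)
          \<le> sqrt K * (log 2 (real n)) powr ((real q - 2) / 2) / sqrt (real n))"
    if n: "2 \<le> n" for n
  proof (intro conjI)
  have P1: "Dab q n a b (multinomial_dist q n u) = 2" if "a \<notin> supp q u \<or> b \<notin> supp q u"
  proof (cases "a \<in> supp q u")
    case False
    then have "u a = 0" using assms(2,4) by (force simp: supp_def)
    then show ?thesis unfolding Dab_def Suc_eq_plus1[symmetric]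
      by (rule Dab_two[OF assms(2,3) _ assms(6,4,5)])
  next
    case True
    then have "b \<notin> supp q u" using that by auto
    then have "u b = 0" using assms(2,5) by (force simp: supp_def)
    then have "(\<Sum>t\<in>Nset q (Suc n). \<bar>shift_eval q n (MD q n u) a t - shift_eval q n (MD q n u) b t\<bar>) = 2"
      using assms(6) by (intro Dab_two[OF assms(2,3) _ _ assms(5,4)]) auto
    then show ?thesis unfolding Dab_def Suc_eq_plus1[symmetric] by (simp add: abs_minus_commute)
  qed
  have P2: "Dab q n a b (multinomial_dist q n u)
          \<le> sqrt K * (log 2 (real n)) powr ((real k - 2) / 2) / sqrt (real n)"
    if ab: "a \<in> supp q u \<and> b \<in> supp q u" and k: "k \<ge> 2" for k :: nat
  proof -
    have pos: "u a > 0" "u b > 0" using ab by (auto simp: supp_def)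
    have "Dab q n a b (multinomial_dist q n u) \<le> sqrt (K / real (Suc n))"
      unfolding K_def by (rule main_bound[OF assms(2-6) pos])
    also have "\<dots> \<le> sqrt K * (log 2 (real n)) powr ((real k - 2) / 2) / sqrt (real n)"
      using pos k by (intro final_ineq n) (auto simp: K_def)
    finally show ?thesis .
  qed
  have cardge: "card (supp q u) \<ge> 2" if ab: "a \<in> supp q u \<and> b \<in> supp q u"
  proof -
    have "{a, b} \<subseteq> supp q u" using ab by auto
    moreover have "finite (supp q u)" by (simp add: supp_def)
    ultimately have "card {a, b} \<le> card (supp q u)" by (rule card_mono[rotated])
    then show ?thesis using assms(6) by simp
  qed
  show "(a \<notin> supp q u \<or> b \<notin> supp q u) \<longrightarrow> Dab q n a b (multinomial_dist q n u) = 2"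
    using P1 by blast
  show "(a \<in> supp q u \<and> b \<in> supp q u) \<longrightarrow>
        Dab q n a b (multinomial_dist q n u)
          \<le> sqrt K * (log 2 (real n)) powr ((real (card (supp q u)) - 2) / 2) / sqrt (real n)"
    using P2 cardge by blast
  show "(\<forall>i\<in>{1..q}. u i > 0) \<longrightarrow>
        Dab q n a b (multinomial_dist q n u)
          \<le> sqrt K * (log 2 (real n)) powr ((real q - 2) / 2) / sqrt (real n)"
  proof
    assume "\<forall>i\<in>{1..q}. u i > 0"
    then have "a \<in> supp q u \<and> b \<in> supp q u" using assms(4,5) by (auto simp: supp_def)
    then show "Dab q n a b (multinomial_dist q n u)
          \<le> sqrt K * (log 2 (real n)) powr ((real q - 2) / 2) / sqrt (real n)"
      using P2[of q] assms(1) by simp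
  qed
  qed
  show ?thesis by (intro exI[of _ "sqrt K"] exI[of _ 2] allI impI main)
qed

end
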